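(* Let $(\Lambda,d)$ be a $k$-graph and let $(\overline{\Lambda},\overline d)$ be its extension as described in the context. If $\Lambda$ is finitely aligned, then $\overline{\Lambda}$ is finitely aligned. If $\Lambda$ is row-finite, then $\overline{\Lambda}$ is row-finite.
   Context: A $k$-graph $(\Lambda,d)$ is a countable category with a degree functor $d:\Lambda\to\mathbb{N}^k$ satisfying unique factorization; $\Lambda^0$ vertices, $r,s$ range/source, $v\Lambda^n=\{\lambda:r(\lambda)=v,d(\lambda)=n\}$; $e_i$ standard basis, $\le$ coordinatewise, $\vee,\wedge$ coordinatewise max/min. A $k$-graph $\Gamma$ is row-finite if $v\Gamma^n$ is finite for all vertices $v$ and $n\in\mathbb{N}^k$; it is finitely aligned if $\Gamma^{\min}(\lambda,\mu)=\{(\alpha,\beta):\lambda\alpha=\mu\beta,\ d(\lambda\alpha)=d(\lambda)\vee d(\mu)\}$ is finite for all $\lambda,\mu\in\Gamma$. For $m\in(\mathbb{N}\cup\{\infty\})^k$, $\Omega_{k,m}$ has objects $\{p\in\mathbb{N}^k:p\le m\}$, morphisms $(p,q)$, $p\le q\le m$, $r(p,q)=p$, $s(p,q)=q$, $d(p,q)=q-p$. A graph morphism $x:\Omega_{k,m}\to\Lambda$ is a degree-preserving functor; $d(x)=m$, $x(a,b)=x((a,b))$, $x(a)=x(a,a)$. It is a boundary path if there is $n_x\in\mathbb{N}^k$, $n_x\le d(x)$, with $x(p)\Lambda^{e_i}=\emptyset$ whenever $p\in\mathbb{N}^k$, $n_x\le p\le d(x)$, $p_i=d(x)_i$; $\Lambda^{\le\infty}$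 is the set of boundary paths. $\sigma^px(a,b)=x(a+p,b+p)$; $\lambda x$ is the concatenation of $\lambda$ and $x$. $V_\Lambda=\{(x;m):x\in\Lambda^{\le\infty},m\in\mathbb{N}^k,m\not\le d(x)\}$, $(x;m)\approx(y;p)$ iff $x(m\wedge d(x))=y(p\wedge d(y))$ and $m-m\wedge d(x)=p-p\wedge d(y)$; classes $[x;m]$ form $\widetilde{V_\Lambda}$. $P_\Lambda=\{(x;(m,n)):x\in\Lambda^{\le\infty},m\le n\in\mathbb{N}^k,n\not\le d(x)\}$, $(x;(m,n))\sim(y;(p,q))$ iff $x(m\wedge d(x),n\wedge d(x))=y(p\wedge d(y),q\wedge d(y))$, $m-m\wedge d(x)=p-p\wedge d(y)$, $n-m=q-p$; classes $[x;(m,n)]$ form $\widetilde{P_\Lambda}$. The extension $\overline{\Lambda}$ is the $k$-graph with objects $\Lambda^0\sqcup\widetilde{V_\Lambda}$ and morphisms $\Lambda\sqcup\widetilde{P_\Lambda}$: on $\Lambda$ everything is as in $\Lambda$; $\overline r([x;(m,n)])=x(m)$ if $m\le d(x)$, else $[x;m]$; $\overline s([x;(m,n)])=[x;n]$; identity at $[x;m]$ is $[x;(m,m)]$; $\lambda[x;(m,n)]=[\lambda\sigma^mx;(0,d(\lambda)+n-m)]$; $[x;(m,n)][y;(p,q)]=[z;(m,n+q-p)]$ with $z=x(0,n\wedge d(x))\sigma^{p\wedge d(y)}y$; degree $\overline d|_\Lambda=d$, $\overline d([x;(m,n)])=n-m$. *)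

theory Defs
  imports "HOL-Analysis.Finite_Cartesian_Product" "HOL-Library.Extended_Nat"
    "HOL-Library.Countable_Set"
begin

text \<open>A k-graph is encoded as a small category given by its sets of objects and
morphisms, range, source, composition (cp f g = "f g", defined when sc f = rg g),
identities and a degree map into nat^'k, where CARD('k) = k.\<close>

record ('v, 'a, 'k) kg =
  obj :: "'v set"
  mor :: "'a set"
  rg :: "'a \<Rightarrow> 'v"
  sc :: "'a \<Rightarrow> 'v"
  cp :: "'a \<Rightarrow> 'a \<Rightarrow> 'a"
  ident :: "'v \<Rightarrow> 'a"
  deg :: "'a \<Rightarrow> nat ^ 'k::finite"

definition vmax :: "nat ^ 'k::finite \<Rightarrow> nat ^ 'k \<Rightarrow> nat ^ 'k" where
  "vmax a b = (\<chi> i. max (a $ i) (b $ i))"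

definition unitv :: "'k::finite \<Rightarrow> nat ^ 'k" where
  "unitv i = (\<chi> j. if j = i then 1 else 0)"

definition kgraph :: "('v, 'a, 'k::finite) kg \<Rightarrow> bool" where
  "kgraph G \<longleftrightarrow>
     countable (obj G) \<and> countable (mor G) \<and>
     (\<forall>f\<in>mor G. rg G f \<in> obj G \<and> sc G f \<in> obj G) \<and>
     (\<forall>v\<in>obj G. ident G v \<in> mor G \<and> rg G (ident G v) = v \<and> sc G (ident G v) = v
                 \<and> deg G (ident G v) = 0) \<and>
     (\<forall>f\<in>mor G. \<forall>g\<in>mor G. sc G f = rg G g \<longrightarrow>
        cp G f g \<in> mor G \<and> rg G (cp G f g) = rg G f \<and> sc G (cp G f g) = sc G g
        \<and> deg G (cp G f g) = deg G f + deg G g) \<and>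
     (\<forall>f\<in>mor G. cp G (ident G (rg G f)) f = f \<and> cp G f (ident G (sc G f)) = f) \<and>
     (\<forall>f\<in>mor G. \<forall>g\<in>mor G. \<forall>h\<in>mor G. sc G f = rg G g \<longrightarrow> sc G g = rg G h \<longrightarrow>
        cp G (cp G f g) h = cp G f (cp G g h)) \<and>
     (\<forall>f\<in>mor G. \<forall>m n. deg G f = m + n \<longrightarrow>
        (\<exists>!(g, h). g \<in> mor G \<and> h \<in> mor G \<and> sc G g = rg G h \<and> cp G g h = f
                  \<and> deg G g = m \<and> deg G h = n))"

definition row_finite :: "('v, 'a, 'k::finite) kg \<Rightarrow> bool" where
  "row_finite G \<longleftrightarrow>
     (\<forall>v\<in>obj G. \<forall>n. finite {f \<in> mor G. rg G f = v \<and> deg G f = n})"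

definition min_ext :: "('v, 'a, 'k::finite) kg \<Rightarrow> 'a \<Rightarrow> 'a \<Rightarrow> ('a \<times> 'a) set" where
  "min_ext G l m = {(a, b). a \<in> mor G \<and> b \<in> mor G \<and> sc G l = rg G a \<and> sc G m = rg G b
       \<and> cp G l a = cp G m b \<and> deg G (cp G l a) = vmax (deg G l) (deg G m)}"

definition finitely_aligned :: "('v, 'a, 'k::finite) kg \<Rightarrow> bool" where
  "finitely_aligned G \<longleftrightarrow> (\<forall>l\<in>mor G. \<forall>m\<in>mor G. finite (min_ext G l m))"

text \<open>A path x is a pair (d(x), f) with d(x) in (N \<union> {\<infinity>})^k and f p q = x(p,q)
(only meaningful for p \<le> q \<le> d(x)).\<close>

type_synonym ('a, 'k) path = "(enat ^ 'k) \<times> (nat ^ 'k \<Rightarrow> nat ^ 'k \<Rightarrow> 'a)"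

definition leE :: "nat ^ 'k::finite \<Rightarrow> enat ^ 'k \<Rightarrow> bool" where
  "leE p m \<longleftrightarrow> (\<forall>i. enat (p $ i) \<le> m $ i)"

definition vmin_e :: "nat ^ 'k::finite \<Rightarrow> enat ^ 'k \<Rightarrow> nat ^ 'k" where
  "vmin_e p m = (\<chi> i. the_enat (min (enat (p $ i)) (m $ i)))"

text \<open>Degree-preserving functor \<Omega>_{k,m} \<rightarrow> \<Lambda>; the object p is sent to rg (x p p).\<close>
definition graph_morph :: "('v, 'a, 'k::finite) kg \<Rightarrow> ('a, 'k) path \<Rightarrow> bool" where
  "graph_morph G x \<longleftrightarrow>
     (\<forall>p q. p \<le> q \<and> leE q (fst x) \<longrightarrow>
        snd x p q \<in> mor G \<and> deg G (snd x p q) = q - p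
        \<and> rg G (snd x p q) = rg G (snd x p p) \<and> sc G (snd x p q) = rg G (snd x q q)) \<and>
     (\<forall>p. leE p (fst x) \<longrightarrow> snd x p p = ident G (rg G (snd x p p))) \<and>
     (\<forall>p q r. p \<le> q \<and> q \<le> r \<and> leE r (fst x) \<longrightarrow> cp G (snd x p q) (snd x q r) = snd x p r)"

definition vtx :: "('v, 'a, 'k::finite) kg \<Rightarrow> ('a, 'k) path \<Rightarrow> nat ^ 'k \<Rightarrow> 'v" where
  "vtx G x p = rg G (snd x p p)"

definition boundary_paths :: "('v, 'a, 'k::finite) kg \<Rightarrow> ('a, 'k) path set" where
  "boundary_paths G = {x. graph_morph G x \<and>
     (\<exists>nx. leE nx (fst x) \<and>
        (\<forall>p. nx \<le> p \<and> leE p (fst x) \<longrightarrow>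
           (\<forall>i. enat (p $ i) = fst x $ i \<longrightarrow>
              {f \<in> mor G. rg G f = vtx G x p \<and> deg G f = unitv i} = {})))}"

definition shift :: "nat ^ 'k::finite \<Rightarrow> ('a, 'k) path \<Rightarrow> ('a, 'k) path" where
  "shift p x = ((\<chi> i. fst x $ i - enat (p $ i)), (\<lambda>a b. snd x (a + p) (b + p)))"

text \<open>The factor f(p,q) of a morphism f, for p \<le> q \<le> d(f).\<close>
definition seg :: "('v, 'a, 'k::finite) kg \<Rightarrow> 'a \<Rightarrow> nat ^ 'k \<Rightarrow> nat ^ 'k \<Rightarrow> 'a" where
  "seg G f p q = (THE b. \<exists>a c. a \<in> mor G \<and> b \<in> mor G \<and> c \<in> mor G
      \<and> sc G a = rg G b \<and> sc G b = rg G c \<and> f = cp G (cp G a b) c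
      \<and> deg G a = p \<and> deg G b = q - p \<and> deg G c = deg G f - q)"

text \<open>Concatenation \<lambda>y of a morphism with a path y with r(y) = s(\<lambda>).\<close>
definition concat :: "('v, 'a, 'k::finite) kg \<Rightarrow> 'a \<Rightarrow> ('a, 'k) path \<Rightarrow> ('a, 'k) path" where
  "concat G l y = ((\<chi> i. enat (deg G l $ i) + fst y $ i),
     (\<lambda>a b. seg G (cp G l (snd y 0 (vmax b (deg G l) - deg G l))) a b))"

definition Vset :: "('v, 'a, 'k::finite) kg \<Rightarrow> (('a, 'k) path \<times> (nat ^ 'k)) set" where
  "Vset G = {(x, m). x \<in> boundary_paths G \<and> \<not> leE m (fst x)}"

definition Vrel :: "('v, 'a, 'k::finite) kg \<Rightarrow> ((('a, 'k) path \<times> (nat ^ 'k)) \<times> (('a, 'k) path \<times> (nat ^ 'k))) set" where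
  "Vrel G = {((x, m), (y, p)). (x, m) \<in> Vset G \<and> (y, p) \<in> Vset G
      \<and> vtx G x (vmin_e m (fst x)) = vtx G y (vmin_e p (fst y))
      \<and> m - vmin_e m (fst x) = p - vmin_e p (fst y)}"

definition Pset :: "('v, 'a, 'k::finite) kg \<Rightarrow> (('a, 'k) path \<times> (nat ^ 'k) \<times> (nat ^ 'k)) set" where
  "Pset G = {(x, m, n). x \<in> boundary_paths G \<and> m \<le> n \<and> \<not> leE n (fst x)}"

definition Prel :: "('v, 'a, 'k::finite) kg \<Rightarrow> ((('a, 'k) path \<times> (nat ^ 'k) \<times> (nat ^ 'k)) \<times> (('a, 'k) path \<times> (nat ^ 'k) \<times> (nat ^ 'k))) set" where
  "Prel G = {((x, m, n), (y, p, q)). (x, m, n) \<in> Pset G \<and> (y, p, q) \<in> Pset G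
      \<and> snd x (vmin_e m (fst x)) (vmin_e n (fst x)) = snd y (vmin_e p (fst y)) (vmin_e q (fst y))
      \<and> m - vmin_e m (fst x) = p - vmin_e p (fst y)
      \<and> n - m = q - p}"

definition Vcls :: "('v, 'a, 'k::finite) kg \<Rightarrow> ('a, 'k) path \<Rightarrow> nat ^ 'k \<Rightarrow> (('a, 'k) path \<times> (nat ^ 'k)) set" where
  "Vcls G x m = Vrel G `` {(x, m)}"

definition Pcls :: "('v, 'a, 'k::finite) kg \<Rightarrow> ('a, 'k) path \<Rightarrow> nat ^ 'k \<Rightarrow> nat ^ 'k \<Rightarrow> (('a, 'k) path \<times> (nat ^ 'k) \<times> (nat ^ 'k)) set" where
  "Pcls G x m n = Prel G `` {(x, m, n)}"

text \<open>Representative of a class (the operations are well defined, so the choice is irrelevant).\<close>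
definition rep :: "'b set \<Rightarrow> 'b" where
  "rep C = (SOME a. a \<in> C)"

type_synonym ('v, 'a, 'k) ext_kg =
  "('v + (('a, 'k) path \<times> (nat ^ 'k)) set,
    'a + (('a, 'k) path \<times> (nat ^ 'k) \<times> (nat ^ 'k)) set, 'k) kg"

definition ext :: "('v, 'a, 'k::finite) kg \<Rightarrow> ('v, 'a, 'k) ext_kg" where
  "ext G = \<lparr>
     obj = Inl ` obj G \<union> Inr ` (Vset G // Vrel G),
     mor = Inl ` mor G \<union> Inr ` (Pset G // Prel G),
     rg = (\<lambda>f. case f of Inl l \<Rightarrow> Inl (rg G l)
              | Inr C \<Rightarrow> (case rep C of (x, m, n) \<Rightarrow>
                   if leE m (fst x) then Inl (vtx G x m) else Inr (Vcls G x m))),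
     sc = (\<lambda>f. case f of Inl l \<Rightarrow> Inl (sc G l)
              | Inr C \<Rightarrow> (case rep C of (x, m, n) \<Rightarrow> Inr (Vcls G x n))),
     cp = (\<lambda>f g. case (f, g) of
              (Inl l, Inl l') \<Rightarrow> Inl (cp G l l')
            | (Inl l, Inr C) \<Rightarrow> (case rep C of (x, m, n) \<Rightarrow>
                 Inr (Pcls G (concat G l (shift m x)) 0 (deg G l + n - m)))
            | (Inr C, Inr D) \<Rightarrow> (case rep C of (x, m, n) \<Rightarrow> case rep D of (y, p, q) \<Rightarrow>
                 Inr (Pcls G (concat G (snd x 0 (vmin_e n (fst x))) (shift (vmin_e p (fst y)) y))
                        m (n + q - p)))
            | (Inr C, Inl l) \<Rightarrow> undefined),
     ident = (\<lambda>v. case v of Inl u \<Rightarrow> Inl (ident G u)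
              | Inr V \<Rightarrow> (case rep V of (x, m) \<Rightarrow> Inr (Pcls G x m m))),
     deg = (\<lambda>f. case f of Inl l \<Rightarrow> deg G l
              | Inr C \<Rightarrow> (case rep C of (x, m, n) \<Rightarrow> n - m)) \<rparr>"

end

theory Submission imports Defs begin

lemma vzero_le[simp]: "0 \<le> (x::nat^'k::finite)" by (simp add: less_eq_vec_def)
lemma vle_addR: "(q::nat^'k::finite) \<le> d \<Longrightarrow> q \<le> d + e" by (simp add: less_eq_vec_def trans_le_add1)
lemma vle_addL: "(q::nat^'k::finite) \<le> e \<Longrightarrow> q \<le> d + e" by (simp add: less_eq_vec_def trans_le_add2)
lemma vdiff_mono: "(q::nat^'k::finite) \<le> r \<Longrightarrow> q - p \<le> r - p" by (simp add: less_eq_vec_def diff_le_mono)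
lemma vdiff_add: "(q::nat^'k::finite) \<le> d \<Longrightarrow> d - q + e = d + e - q"
  unfolding less_eq_vec_def vec_eq_iff by simp
lemma vadd_diff: "(p::nat^'k::finite) \<le> q \<Longrightarrow> p + (q - p) = q"
  unfolding less_eq_vec_def vec_eq_iff by simp
lemma vadd_diff2: "(p::nat^'k::finite) \<le> q \<Longrightarrow> q - p + p = q"
  unfolding less_eq_vec_def vec_eq_iff by simp
lemma vdiff_diff: "(p::nat^'k::finite) \<le> q \<Longrightarrow> q \<le> r \<Longrightarrow> r - p - (q - p) = r - q"
  unfolding less_eq_vec_def vec_eq_iff by simp
lemma vle_trans: "(p::nat^'k::finite) \<le> q \<Longrightarrow> q \<le> r \<Longrightarrow> p \<le> r" by (rule order.trans)
lemma vadd_diff_cancel[simp]: "(p::nat^'k::finite) + q - p = q" unfolding vec_eq_iff by simp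
lemma vadd_diff_cancel2[simp]: "(q::nat^'k::finite) + p - p = q" unfolding vec_eq_iff by simp

lemma vmin_comp: "vmin_e p D $ i = (case D $ i of enat d \<Rightarrow> min (p$i) d | \<infinity> \<Rightarrow> p $ i)"
  unfolding vmin_e_def by (cases "D $ i") auto

lemma enat_le_case: "enat p \<le> D \<longleftrightarrow> (case D of enat d \<Rightarrow> p \<le> d | \<infinity> \<Rightarrow> True)"
  by (cases D) auto

lemma leE_comp: "leE p D \<longleftrightarrow> (\<forall>i. case D$i of enat d \<Rightarrow> p$i \<le> d | \<infinity> \<Rightarrow> True)"
  unfolding leE_def enat_le_case ..

lemma leE_mono: "q \<le> p \<Longrightarrow> leE p D \<Longrightarrow> leE q D"
  unfolding leE_def less_eq_vec_def by (meson enat_ord_simps(1) order.trans)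

lemma leE_vmin: "leE (vmin_e p D) D"
  unfolding leE_comp by (auto simp: vmin_comp split: enat.splits)

lemma vmin_le: "vmin_e p D \<le> p"
  unfolding less_eq_vec_def by (auto simp: vmin_comp split: enat.splits)

lemma vmin_id: "leE p D \<Longrightarrow> vmin_e p D = p"
  unfolding leE_comp vec_eq_iff by (auto simp: vmin_comp split: enat.splits)

lemma vmin_mono: assumes "m \<le> n" shows "vmin_e m D \<le> vmin_e n D"
  unfolding less_eq_vec_def
proof
  fix i have "m$i \<le> n$i" using assms by (simp add: less_eq_vec_def)
  thus "vmin_e m D $ i \<le> vmin_e n D $ i" by (auto simp: vmin_comp split: enat.splits)
qed

lemma vmax_comp[simp]: "vmax a b $ i = max (a $ i) (b $ i)"
  unfolding vmax_def by simp

lemma shift_fst: "fst (shift s x) $ i = fst x $ i - enat (s $ i)"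
  unfolding shift_def by simp
lemma shift_snd[simp]: "snd (shift s x) a b = snd x (a + s) (b + s)"
  unfolding shift_def by simp

lemma leE_shift: assumes a: "leE s (fst x)"
  shows "leE q (fst (shift s x)) \<longleftrightarrow> leE (q + s) (fst x)"
proof -
  have "\<forall>i. (case fst (shift s x) $ i of enat d \<Rightarrow> q$i \<le> d | \<infinity> \<Rightarrow> True) = (case fst x $ i of enat d \<Rightarrow> (q+s)$i \<le> d | \<infinity> \<Rightarrow> True)"
  proof
    fix i from a have "case fst x $ i of enat d \<Rightarrow> s$i \<le> d | \<infinity> \<Rightarrow> True" unfolding leE_comp by blast
    then show "(case fst (shift s x) $ i of enat d \<Rightarrow> q$i \<le> d | \<infinity> \<Rightarrow> True) = (case fst x $ i of enat d \<Rightarrow> (q+s)$i \<le> d | \<infinity> \<Rightarrow> True)"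
      by (cases "fst x $ i") (auto simp: shift_fst)
  qed
  thus ?thesis unfolding leE_comp by simp
qed

lemma vmax_absorb: assumes "(d::nat^'k::finite) \<le> p" shows "vmax p d = p"
  unfolding vec_eq_iff
proof
  fix i have "d$i \<le> p$i" using assms by (simp add: less_eq_vec_def)
  thus "vmax p d $ i = p $ i" by simp
qed

lemma vmax_diff_mono: assumes "(q::nat^'k::finite) \<le> b" shows "vmax q d - d \<le> vmax b d - d"
  unfolding less_eq_vec_def
proof
  fix i have "q$i \<le> b$i" using assms by (simp add: less_eq_vec_def)
  thus "(vmax q d - d) $ i \<le> (vmax b d - d) $ i"
    by (cases "q$i \<le> d$i"; cases "b$i \<le> d$i") (auto simp: max_def)
qed

lemma enat_add_le: "enat a \<le> D \<Longrightarrow> enat (b + a) \<le> enat b + D" by (cases D) auto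

lemma vle_add_split: assumes "(a::nat^'k::finite) + b \<le> p" shows "a \<le> p \<and> b \<le> p - a"
  unfolding less_eq_vec_def
proof (intro conjI allI)
  fix i from assms have "a$i + b$i \<le> p$i" by (simp add: less_eq_vec_def)
  thus "a$i \<le> p$i" "b$i \<le> (p-a)$i" by simp_all
qed

definition mnE :: "enat \<Rightarrow> nat \<Rightarrow> nat" where
  "mnE X a = (case X of enat d \<Rightarrow> min a d | \<infinity> \<Rightarrow> a)"

lemma vmin_mn: "vmin_e p D $ i = mnE (D $ i) (p $ i)"
  unfolding mnE_def by (rule vmin_comp)

lemma coordP: assumes "(m::nat) \<le> n"
  shows "mnE X n - mnE X m \<le> n - m" "n - mnE X n = 0 \<longrightarrow> mnE X n - mnE X m = n - m"
  using assms by (cases X; auto simp: mnE_def min_def)+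

lemma coordL: assumes "(m::nat) \<le> n" "enat m \<le> X"
  shows "mnE (enat dl + (X - enat m)) (dl + n - m) = dl + (mnE X n - m)"
    "\<not> enat n \<le> X \<longrightarrow> \<not> enat (dl + n - m) \<le> enat dl + (X - enat m)"
    "mnE X m = m"
  using assms by (cases X; auto simp: mnE_def min_def)+

lemma coordR: assumes "(m::nat) \<le> n" "p \<le> q" "n - mnE X n = p - mnE Y p"
  shows "mnE (enat (mnE X n) + (Y - enat (mnE Y p))) m = mnE X m"
    "mnE (enat (mnE X n) + (Y - enat (mnE Y p))) (n + q - p) = mnE X n + (mnE Y q - mnE Y p)"
    "\<not> enat q \<le> Y \<longrightarrow> \<not> enat (n + q - p) \<le> enat (mnE X n) + (Y - enat (mnE Y p))"
    "n - mnE X n \<noteq> 0 \<longrightarrow> mnE Y q - mnE Y p = 0"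
  using assms by (cases X; cases Y; auto simp: mnE_def min_def split: if_splits)+

definition kerR :: "'b set \<Rightarrow> ('b \<Rightarrow> 'c) \<Rightarrow> ('b \<times> 'b) set" where
  "kerR A k = {(a, b). a \<in> A \<and> b \<in> A \<and> k a = k b}"

lemma kerR_cls: assumes "C \<in> A // kerR A k" shows "rep C \<in> C \<and> rep C \<in> A \<and> C = kerR A k `` {rep C}
   \<and> (\<forall>b\<in>C. b \<in> A \<and> k b = k (rep C))"
proof -
  obtain a where a: "a \<in> A" "C = kerR A k `` {a}" using assms unfolding quotient_def by blast
  have C: "C = {b. b \<in> A \<and> k b = k a}" using a unfolding kerR_def by auto
  have "a \<in> C" using C a by auto
  hence r: "rep C \<in> C" unfolding rep_def by (rule someI)
  show ?thesis using r C unfolding kerR_def by auto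
qed

lemma kerR_in: "a \<in> A \<Longrightarrow> kerR A k `` {a} \<in> A // kerR A k \<and> rep (kerR A k `` {a}) \<in> A
    \<and> k (rep (kerR A k `` {a})) = k a"
proof -
  assume a: "a \<in> A"
  have C: "kerR A k `` {a} \<in> A // kerR A k" using a unfolding quotient_def by blast
  have "a \<in> kerR A k `` {a}" using a unfolding kerR_def by auto
  hence "rep (kerR A k `` {a}) \<in> kerR A k `` {a}" unfolding rep_def by (rule someI)
  thus ?thesis using C unfolding kerR_def by auto
qed

lemma kerR_img: "a \<in> A \<Longrightarrow> kerR A k `` {a} = {b \<in> A. k b = k a}"
  unfolding kerR_def by auto

lemma kerR_eq: assumes "C \<in> A // kerR A k" "C' \<in> A // kerR A k" "k (rep C) = k (rep C')" shows "C = C'"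
proof -
  have r: "rep C \<in> A" "C = kerR A k `` {rep C}" using kerR_cls[OF assms(1)] by blast+
  have r': "rep C' \<in> A" "C' = kerR A k `` {rep C'}" using kerR_cls[OF assms(2)] by blast+
  have "C = {b \<in> A. k b = k (rep C)}" using trans[OF r(2) kerR_img[OF r(1)]] .
  moreover have "C' = {b \<in> A. k b = k (rep C')}" using trans[OF r'(2) kerR_img[OF r'(1)]] .
  ultimately show ?thesis using assms(3) by simp
qed

definition keyP :: "('v, 'a, 'k::finite) kg \<Rightarrow> (('a, 'k) path \<times> (nat ^ 'k) \<times> (nat ^ 'k)) \<Rightarrow> 'a \<times> (nat^'k) \<times> (nat^'k)" where
  "keyP G t = (case t of (x, m, n) \<Rightarrow> (snd x (vmin_e m (fst x)) (vmin_e n (fst x)), m - vmin_e m (fst x), n - m))"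

definition keyV :: "('v, 'a, 'k::finite) kg \<Rightarrow> (('a, 'k) path \<times> (nat ^ 'k)) \<Rightarrow> 'v \<times> (nat^'k)" where
  "keyV G t = (case t of (x, m) \<Rightarrow> (vtx G x (vmin_e m (fst x)), m - vmin_e m (fst x)))"

lemma Prel_ker: "Prel G = kerR (Pset G) (keyP G)"
  unfolding Prel_def kerR_def keyP_def by auto

lemma Vrel_ker: "Vrel G = kerR (Vset G) (keyV G)"
  unfolding Vrel_def kerR_def keyV_def by auto

lemma Pcls_ker: "Pcls G x m n = kerR (Pset G) (keyP G) `` {(x, m, n)}"
  unfolding Pcls_def Prel_ker ..

lemma Vcls_ker: "Vcls G x m = kerR (Vset G) (keyV G) `` {(x, m)}"
  unfolding Vcls_def Vrel_ker ..

lemma ext_simps: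
  "obj (ext G) = Inl ` obj G \<union> Inr ` (Vset G // Vrel G)"
  "mor (ext G) = Inl ` mor G \<union> Inr ` (Pset G // Prel G)"
  "rg (ext G) (Inl l) = Inl (rg G l)"
  "rg (ext G) (Inr C) = (case rep C of (x, m, n) \<Rightarrow>
                   if leE m (fst x) then Inl (vtx G x m) else Inr (Vcls G x m))"
  "sc (ext G) (Inl l) = Inl (sc G l)"
  "sc (ext G) (Inr C) = (case rep C of (x, m, n) \<Rightarrow> Inr (Vcls G x n))"
  "cp (ext G) (Inl l) (Inl l') = Inl (cp G l l')"
  "cp (ext G) (Inl l) (Inr C) = (case rep C of (x, m, n) \<Rightarrow>
                 Inr (Pcls G (concat G l (shift m x)) 0 (deg G l + n - m)))"
  "cp (ext G) (Inr C) (Inr D) = (case rep C of (x, m, n) \<Rightarrow> case rep D of (y, p, q) \<Rightarrow>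
                 Inr (Pcls G (concat G (snd x 0 (vmin_e n (fst x))) (shift (vmin_e p (fst y)) y))
                        m (n + q - p)))"
  "deg (ext G) (Inl l) = deg G l"
  "deg (ext G) (Inr C) = (case rep C of (x, m, n) \<Rightarrow> n - m)"
  unfolding ext_def by simp_all

lemma vsub1: assumes "(m::nat^'k::finite) \<le> n" "p \<le> q" shows "n + q - p - m = (n - m) + (q - p)"
  unfolding vec_eq_iff
proof
  fix i have "m$i \<le> n$i" "p$i \<le> q$i" using assms by (simp_all add: less_eq_vec_def)
  thus "(n + q - p - m)$i = ((n - m) + (q - p))$i" by simp
qed
lemma vle2: assumes "(m::nat^'k::finite) \<le> n" "p \<le> q" shows "m \<le> n + q - p"
  unfolding less_eq_vec_def
proof
  fix i have "m$i \<le> n$i" "p$i \<le> q$i" using assms by (simp_all add: less_eq_vec_def)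
  thus "m$i \<le> (n + q - p)$i" by simp
qed
lemma vadd3: assumes "(m::nat^'k::finite) \<le> n" shows "m + ((n - m) + e) = n + e"
  unfolding vec_eq_iff
proof
  fix i have "m$i \<le> n$i" using assms by (simp_all add: less_eq_vec_def)
  thus "(m + ((n - m) + e))$i = (n + e)$i" by simp
qed
lemma vadd4: "(m::nat^'k::finite) \<le> n \<Longrightarrow> d + n - m = d + (n - m)"
  unfolding less_eq_vec_def vec_eq_iff by simp
lemma vle_self_add: "(d::nat^'k::finite) \<le> d + e" by (simp add: less_eq_vec_def)

definition Kx :: "('v, 'a, 'k::finite) kg \<Rightarrow> 'a + (('a, 'k) path \<times> (nat ^ 'k) \<times> (nat ^ 'k)) set \<Rightarrow> 'a \<times> (nat^'k) \<times> (nat^'k)" where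
  "Kx G f = (case f of Inl l \<Rightarrow> (l, 0, deg G l) | Inr C \<Rightarrow> keyP G (rep C))"

definition Ox :: "('v, 'a, 'k::finite) kg \<Rightarrow> 'a + (('a, 'k) path \<times> (nat ^ 'k) \<times> (nat ^ 'k)) set \<Rightarrow> nat^'k" where
  "Ox G f = (case f of Inl l \<Rightarrow> 0 | Inr C \<Rightarrow> (case rep C of (x, m, n) \<Rightarrow> n - vmin_e n (fst x)))"

lemma Pcls_in: "(x, m, n) \<in> Pset G \<Longrightarrow> Pcls G x m n \<in> Pset G // Prel G \<and> keyP G (rep (Pcls G x m n)) = keyP G (x, m, n)"
  unfolding Pcls_ker Prel_ker using kerR_in[of "(x, m, n)" "Pset G" "keyP G"] by blast

lemma Pq_rep: "C \<in> Pset G // Prel G \<Longrightarrow> rep C \<in> Pset G"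
  unfolding Prel_ker using kerR_cls[of C "Pset G" "keyP G"] by blast

lemma Pq_eq: "C \<in> Pset G // Prel G \<Longrightarrow> C' \<in> Pset G // Prel G \<Longrightarrow> keyP G (rep C) = keyP G (rep C') \<Longrightarrow> C = C'"
  unfolding Prel_ker by (rule kerR_eq)

lemma Vcls_key: "(x, m) \<in> Vset G \<Longrightarrow> (y, p) \<in> Vset G \<Longrightarrow> Vcls G x m = Vcls G y p \<Longrightarrow> keyV G (x, m) = keyV G (y, p)"
  unfolding Vcls_ker using kerR_in[of "(x, m)" "Vset G" "keyV G"] kerR_in[of "(y, p)" "Vset G" "keyV G"] by metis

lemma coordFA: fixes dl da dm db Nl Na Nm :: nat
  assumes "dl \<le> Nl" "da \<le> Na" "Nl + Na = max Nl Nm" "dl + da = dm + db"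
    "ol \<noteq> 0 \<longrightarrow> da = 0" "ol = 0 \<longrightarrow> dl = Nl" "om \<noteq> 0 \<longrightarrow> db = 0" "om = 0 \<longrightarrow> dm = Nm"
  shows "dl + da = max dl dm"
  using assms by (cases "ol = 0"; cases "om = 0") (auto simp: max_def)

lemma finite_vle: "finite {d::nat^'k::finite. d \<le> N}"
proof -
  have "{d::nat^'k::finite. d \<le> N} \<subseteq> vec_lambda ` (PiE UNIV (\<lambda>i. {..N$i}))"
  proof
    fix d :: "nat^'k" assume "d \<in> {d. d \<le> N}"
    hence "vec_nth d \<in> PiE UNIV (\<lambda>i. {..N$i})" by (auto simp: less_eq_vec_def PiE_UNIV_domain)
    thus "d \<in> vec_lambda ` (PiE UNIV (\<lambda>i. {..N$i}))" by (metis image_eqI vec_nth_inverse)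
  qed
  moreover have "finite (PiE UNIV (\<lambda>i::'k. {..N$i}))" by (rule finite_PiE) auto
  ultimately show ?thesis using finite_subset by blast
qed

locale kgl =
  fixes G :: "('v, 'a, 'k::finite) kg"
  assumes kg: "kgraph G"
begin

lemma mor_obj: "f \<in> mor G \<Longrightarrow> rg G f \<in> obj G \<and> sc G f \<in> obj G"
  using kg unfolding kgraph_def by blast

lemma id_props: "v \<in> obj G \<Longrightarrow> ident G v \<in> mor G \<and> rg G (ident G v) = v \<and> sc G (ident G v) = v
                 \<and> deg G (ident G v) = 0"
  using kg unfolding kgraph_def by blast

lemma cp_props: "f \<in> mor G \<Longrightarrow> g \<in> mor G \<Longrightarrow> sc G f = rg G g \<Longrightarrow>
        cp G f g \<in> mor G \<and> rg G (cp G f g) = rg G f \<and> sc G (cp G f g) = sc G g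
        \<and> deg G (cp G f g) = deg G f + deg G g"
  using kg unfolding kgraph_def by blast

lemma id_l: "f \<in> mor G \<Longrightarrow> cp G (ident G (rg G f)) f = f"
  using kg unfolding kgraph_def by blast
lemma id_r: "f \<in> mor G \<Longrightarrow> cp G f (ident G (sc G f)) = f"
  using kg unfolding kgraph_def by blast

lemma assoc: "f \<in> mor G \<Longrightarrow> g \<in> mor G \<Longrightarrow> h \<in> mor G \<Longrightarrow> sc G f = rg G g \<Longrightarrow> sc G g = rg G h \<Longrightarrow>
        cp G (cp G f g) h = cp G f (cp G g h)"
  using kg unfolding kgraph_def by blast

lemma fact_ax: "f \<in> mor G \<Longrightarrow> deg G f = m + n \<Longrightarrow>
        (\<exists>!(g, h). g \<in> mor G \<and> h \<in> mor G \<and> sc G g = rg G h \<and> cp G g h = f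
                  \<and> deg G g = m \<and> deg G h = n)"
  using kg unfolding kgraph_def by blast

lemma vle_add_diff: "(m::nat^'k) \<le> d \<Longrightarrow> d = m + (d - m)"
  by (simp add: vec_eq_iff less_eq_vec_def)

lemma fact_ex:
  assumes "f \<in> mor G" "m \<le> deg G f"
  obtains g h where "g \<in> mor G" "h \<in> mor G" "sc G g = rg G h" "cp G g h = f"
     "deg G g = m" "deg G h = deg G f - m"
proof -
  have "deg G f = m + (deg G f - m)" using assms(2) by (rule vle_add_diff)
  from fact_ax[OF assms(1) this] show ?thesis using that by auto
qed

lemma fact_un:
  assumes "g \<in> mor G" "h \<in> mor G" "sc G g = rg G h"
    "g' \<in> mor G" "h' \<in> mor G" "sc G g' = rg G h'"
    "cp G g h = cp G g' h'" "deg G g = deg G g'" "deg G h = deg G h'"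
  shows "g = g' \<and> h = h'"
proof -
  have f: "cp G g h \<in> mor G" "deg G (cp G g h) = deg G g + deg G h"
    using cp_props assms by auto
  from fact_ax[OF f] show ?thesis using assms by auto
qed

lemma deg0: assumes "b \<in> mor G" "deg G b = 0" shows "b = ident G (rg G b)"
proof -
  have o: "rg G b \<in> obj G" "sc G b \<in> obj G" using mor_obj assms by auto
  have "ident G (rg G b) = b \<and> b = ident G (sc G b)"
    apply (rule fact_un)
    using assms o id_props[of "rg G b"] id_props[of "sc G b"] id_l id_r by auto
  thus ?thesis by simp
qed

lemma seg_char:
  assumes "a \<in> mor G" "b \<in> mor G" "c \<in> mor G" "sc G a = rg G b" "sc G b = rg G c"
    "f = cp G (cp G a b) c" "deg G a = p" "deg G b = q - p" "deg G c = deg G f - q"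
    "p \<le> q" "q \<le> deg G f"
  shows "seg G f p q = b"
  unfolding seg_def
proof (rule the_equality)
  show "\<exists>a c. a \<in> mor G \<and> b \<in> mor G \<and> c \<in> mor G \<and> sc G a = rg G b \<and> sc G b = rg G c
      \<and> f = cp G (cp G a b) c \<and> deg G a = p \<and> deg G b = q - p \<and> deg G c = deg G f - q"
    using assms by blast
next
  fix b' assume "\<exists>a c. a \<in> mor G \<and> b' \<in> mor G \<and> c \<in> mor G \<and> sc G a = rg G b' \<and> sc G b' = rg G c
      \<and> f = cp G (cp G a b') c \<and> deg G a = p \<and> deg G b' = q - p \<and> deg G c = deg G f - q"
  then obtain a' c' where h: "a' \<in> mor G" "b' \<in> mor G" "c' \<in> mor G" "sc G a' = rg G b'" "sc G b' = rg G c'"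
      "f = cp G (cp G a' b') c'" "deg G a' = p" "deg G b' = q - p" "deg G c' = deg G f - q" by blast
  have ab: "cp G a b \<in> mor G" "sc G (cp G a b) = rg G c" "deg G (cp G a b) = p + (q - p)"
    using cp_props assms by auto
  have ab': "cp G a' b' \<in> mor G" "sc G (cp G a' b') = rg G c'" "deg G (cp G a' b') = p + (q - p)"
    using cp_props h by auto
  have "cp G a b = cp G a' b'"
    using fact_un[OF ab(1) assms(3) ab(2) ab'(1) h(3) ab'(2)] assms h ab ab' by auto
  then show "b' = b"
    using fact_un[OF assms(1,2,4) h(1,2,4)] assms h by auto
qed

lemma seg_ex:
  assumes "f \<in> mor G" "p \<le> q" "q \<le> deg G f"
  obtains a c where "a \<in> mor G" "seg G f p q \<in> mor G" "c \<in> mor G" "sc G a = rg G (seg G f p q)"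
    "sc G (seg G f p q) = rg G c" "f = cp G (cp G a (seg G f p q)) c" "deg G a = p"
    "deg G (seg G f p q) = q - p" "deg G c = deg G f - q"
proof -
  obtain g c where gc: "g \<in> mor G" "c \<in> mor G" "sc G g = rg G c" "cp G g c = f"
     "deg G g = q" "deg G c = deg G f - q" using fact_ex[OF assms(1,3)] by metis
  obtain a b where ab: "a \<in> mor G" "b \<in> mor G" "sc G a = rg G b" "cp G a b = g"
     "deg G a = p" "deg G b = q - p" using fact_ex[OF gc(1)] assms(2) gc(5) by metis
  have sbc: "sc G b = rg G c" using cp_props[OF ab(1,2,3)] ab gc by auto
  have "seg G f p q = b"
    by (rule seg_char[OF ab(1,2) gc(2) ab(3) sbc]) (use ab gc assms in auto)
  thus ?thesis using that ab gc sbc by auto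
qed

lemma vdiff_self: "(d::nat^'k) - d = 0" by (simp add: vec_eq_iff)

lemma seg_full: assumes "f \<in> mor G" shows "seg G f 0 (deg G f) = f"
proof -
  have o: "rg G f \<in> obj G" "sc G f \<in> obj G" using mor_obj assms by auto
  show ?thesis
    by (rule seg_char[of "ident G (rg G f)" f "ident G (sc G f)"])
       (use assms o id_props[of "rg G f"] id_props[of "sc G f"] id_l id_r in \<open>auto simp: vdiff_self\<close>)
qed

lemma seg_end: assumes "f \<in> mor G" shows "seg G f (deg G f) (deg G f) = ident G (sc G f)"
proof -
  have o: "sc G f \<in> obj G" using mor_obj assms by auto
  show ?thesis
    by (rule seg_char[of f "ident G (sc G f)" "ident G (sc G f)"])
       (use assms o id_props[of "sc G f"] id_r in \<open>auto simp: vdiff_self\<close>)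
qed

lemma seg_mid:
  assumes "a \<in> mor G" "b \<in> mor G" "c \<in> mor G" "sc G a = rg G b" "sc G b = rg G c"
  shows "seg G (cp G (cp G a b) c) (deg G a) (deg G a + deg G b) = b"
proof -
  have ab: "cp G a b \<in> mor G" "deg G (cp G a b) = deg G a + deg G b" "sc G (cp G a b) = rg G c"
    using cp_props assms by auto
  have d: "deg G (cp G (cp G a b) c) = deg G a + deg G b + deg G c"
    using cp_props[OF ab(1) assms(3) ab(3)] ab by auto
  show ?thesis
    by (rule seg_char[OF assms]) (auto simp: d vec_eq_iff less_eq_vec_def)
qed

lemma seg_ext:
  assumes "f \<in> mor G" "g \<in> mor G" "sc G f = rg G g" "p \<le> q" "q \<le> deg G f"
  shows "seg G (cp G f g) p q = seg G f p q"
proof -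
  obtain a c where h: "a \<in> mor G" "seg G f p q \<in> mor G" "c \<in> mor G" "sc G a = rg G (seg G f p q)"
    "sc G (seg G f p q) = rg G c" "f = cp G (cp G a (seg G f p q)) c" "deg G a = p"
    "deg G (seg G f p q) = q - p" "deg G c = deg G f - q"
    using seg_ex[OF assms(1,4,5)] by metis
  let ?b = "seg G f p q"
  have ab: "cp G a ?b \<in> mor G" "sc G (cp G a ?b) = rg G c" using cp_props h by auto
  have scg: "sc G c = rg G g" using assms(3) h(6) cp_props[OF ab(1) h(3) ab(2)] by auto
  have cg: "cp G c g \<in> mor G" "deg G (cp G c g) = deg G c + deg G g" "rg G (cp G c g) = rg G c"
    using cp_props[OF h(3) assms(2) scg] by auto
  have e: "cp G f g = cp G (cp G a ?b) (cp G c g)"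
    using assoc[OF ab(1) h(3) assms(2) ab(2) scg] h(6) by simp
  have dfg: "deg G (cp G f g) = deg G f + deg G g" using cp_props assms by auto
  show ?thesis
    by (rule seg_char[OF h(1,2) cg(1) h(4)]) (use h cg e dfg assms in \<open>auto simp: vdiff_add vle_addR\<close>)
qed

lemma seg_split:
  assumes "f \<in> mor G" "p \<le> q" "q \<le> r" "r \<le> deg G f"
  shows "cp G (seg G f p q) (seg G f q r) = seg G f p r \<and> sc G (seg G f p q) = rg G (seg G f q r)"
proof -
  have pr: "p \<le> r" using assms by (meson order.trans)
  obtain A D where h: "A \<in> mor G" "seg G f p r \<in> mor G" "D \<in> mor G" "sc G A = rg G (seg G f p r)"
    "sc G (seg G f p r) = rg G D" "f = cp G (cp G A (seg G f p r)) D" "deg G A = p"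
    "deg G (seg G f p r) = r - p" "deg G D = deg G f - r"
    using seg_ex[OF assms(1) pr assms(4)] by metis
  let ?X = "seg G f p r"
  have "q - p \<le> deg G ?X" using h(8) assms by (simp add: vdiff_mono)
  then obtain B C where bc: "B \<in> mor G" "C \<in> mor G" "sc G B = rg G C" "cp G B C = ?X"
     "deg G B = q - p" "deg G C = deg G ?X - (q - p)" using fact_ex[OF h(2)] by metis
  have rB: "rg G B = rg G ?X" "sc G C = sc G ?X" using cp_props[OF bc(1,2,3)] bc(4) by auto
  have AB: "cp G A B \<in> mor G" "sc G (cp G A B) = rg G C" "deg G (cp G A B) = deg G A + deg G B"
    using cp_props[OF h(1) bc(1)] h rB bc by auto
  have CD: "cp G C D \<in> mor G" "rg G (cp G C D) = rg G C" "deg G (cp G C D) = deg G C + deg G D"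
    using cp_props[OF bc(2) h(3)] h rB by auto
  have f1: "f = cp G (cp G (cp G A B) C) D"
    using h(6) bc(4) assoc[OF h(1) bc(1,2)] h(4) rB bc(3) by simp
  have f2: "f = cp G (cp G A B) (cp G C D)"
    using f1 assoc[OF AB(1) bc(2) h(3) AB(2)] h(5) rB by simp
  have qf: "q \<le> deg G f" using assms by (meson order.trans)
  have dC: "deg G C = r - q" using bc(6) h(8) vdiff_diff assms by metis
  have dCD: "deg G (cp G C D) = deg G f - q" using CD(3) dC h(9) assms
    unfolding less_eq_vec_def vec_eq_iff by simp
  have dAB: "deg G (cp G A B) = q" using AB(3) h(7) bc(5) vadd_diff assms by metis
  have "seg G f p q = B"
    by (rule seg_char[OF h(1) bc(1) CD(1)]) (use h rB bc CD f2 assms dCD qf in auto)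
  moreover have "seg G f q r = C"
    by (rule seg_char[OF AB(1) bc(2) h(3) AB(2)]) (use h rB bc dC f1 assms dAB in auto)
  ultimately show ?thesis using bc by auto
qed

lemma seg_props:
  assumes "f \<in> mor G" "p \<le> q" "q \<le> deg G f"
  shows "seg G f p q \<in> mor G" "deg G (seg G f p q) = q - p"
    "rg G (seg G f p q) = rg G (seg G f p p)" "sc G (seg G f p q) = rg G (seg G f q q)"
    "seg G f p p = ident G (rg G (seg G f p p))"
proof -
  show m: "seg G f p q \<in> mor G" "deg G (seg G f p q) = q - p" using seg_ex[OF assms] by metis+
  have pq: "p \<le> deg G f" using assms by (meson order.trans)
  have m0: "seg G f p p \<in> mor G" "deg G (seg G f p p) = 0" using seg_ex[OF assms(1) order.refl pq]
    by (metis vdiff_self)+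
  show i: "seg G f p p = ident G (rg G (seg G f p p))" using deg0 m0 by auto
  have "sc G (seg G f p p) = rg G (seg G f p q)" using seg_split[OF assms(1) order.refl assms(2,3)] by auto
  moreover have "sc G (seg G f p p) = rg G (seg G f p p)"
    using i id_props[of "rg G (seg G f p p)"] mor_obj[OF m0(1)] by metis
  ultimately show "rg G (seg G f p q) = rg G (seg G f p p)" by simp
  show "sc G (seg G f p q) = rg G (seg G f q q)" using seg_split[OF assms(1,2) order.refl assms(3)] by auto
qed

lemma gm_seg: "graph_morph G x \<Longrightarrow> p \<le> q \<Longrightarrow> leE q (fst x) \<Longrightarrow>
   snd x p q \<in> mor G \<and> deg G (snd x p q) = q - p \<and> rg G (snd x p q) = vtx G x p \<and> sc G (snd x p q) = vtx G x q"
  unfolding graph_morph_def vtx_def by blast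

lemma gm_id: "graph_morph G x \<Longrightarrow> leE p (fst x) \<Longrightarrow> snd x p p = ident G (vtx G x p)"
  unfolding graph_morph_def vtx_def by blast

lemma gm_cp: "graph_morph G x \<Longrightarrow> p \<le> q \<Longrightarrow> q \<le> r \<Longrightarrow> leE r (fst x) \<Longrightarrow> cp G (snd x p q) (snd x q r) = snd x p r"
  unfolding graph_morph_def by blast

lemma vtx_obj: "graph_morph G x \<Longrightarrow> leE p (fst x) \<Longrightarrow> vtx G x p \<in> obj G"
  using gm_seg[OF _ order.refl] mor_obj by metis

lemma shift_gm: assumes x: "graph_morph G x" and s: "leE s (fst x)"
  shows "graph_morph G (shift s x)"
proof -
  have L: "\<And>q. leE q (fst (shift s x)) \<longleftrightarrow> leE (q + s) (fst x)" using leE_shift[OF s] .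
  have V: "\<And>p. vtx G (shift s x) p = vtx G x (p + s)" unfolding vtx_def by simp
  have A: "\<And>p q. p \<le> q \<Longrightarrow> p + s \<le> q + s" by (simp add: less_eq_vec_def)
  show ?thesis unfolding graph_morph_def
  proof (intro conjI; intro allI impI)
    fix p q assume h: "p \<le> q \<and> leE q (fst (shift s x))"
    hence h2: "p + s \<le> q + s" "leE (q + s) (fst x)" using L A by auto
    have "rg G (snd (shift s x) p p) = vtx G x (p + s)" using V unfolding vtx_def by simp
    moreover have "rg G (snd (shift s x) q q) = vtx G x (q + s)" using V unfolding vtx_def by simp
    ultimately show "snd (shift s x) p q \<in> mor G \<and> deg G (snd (shift s x) p q) = q - p \<and>
         rg G (snd (shift s x) p q) = rg G (snd (shift s x) p p) \<and>
         sc G (snd (shift s x) p q) = rg G (snd (shift s x) q q)"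
      using gm_seg[OF x h2] by (simp add: vec_eq_iff)
  next
    fix p assume "leE p (fst (shift s x))"
    hence "leE (p + s) (fst x)" using L by auto
    thus "snd (shift s x) p p = ident G (rg G (snd (shift s x) p p))"
      using gm_id[OF x] unfolding vtx_def by simp
  next
    fix p q r assume h: "p \<le> q \<and> q \<le> r \<and> leE r (fst (shift s x))"
    hence "p + s \<le> q + s" "q + s \<le> r + s" "leE (r + s) (fst x)" using L A by auto
    thus "cp G (snd (shift s x) p q) (snd (shift s x) q r) = snd (shift s x) p r"
      using gm_cp[OF x] by simp
  qed
qed

lemma vtx_shift: "vtx G (shift s x) p = vtx G x (p + s)" unfolding vtx_def by simp

lemma shift_bp: assumes x: "x \<in> boundary_paths G" and s: "leE s (fst x)"
  shows "shift s x \<in> boundary_paths G"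
proof -
  have gm: "graph_morph G x" using x unfolding boundary_paths_def by blast
  obtain nx where nx: "leE nx (fst x)" "\<And>p i. nx \<le> p \<Longrightarrow> leE p (fst x) \<Longrightarrow> enat (p $ i) = fst x $ i \<Longrightarrow>
           {f \<in> mor G. rg G f = vtx G x p \<and> deg G f = unitv i} = {}"
    using x unfolding boundary_paths_def by blast
  have L: "\<And>q. leE q (fst (shift s x)) \<longleftrightarrow> leE (q + s) (fst x)" using leE_shift[OF s] .
  have nx2: "leE (nx - s) (fst (shift s x))"
  proof -
    have e: "nx - s + s = vmax nx s" by (simp add: vec_eq_iff max_def)
    have "leE (vmax nx s) (fst x)" using nx(1) s unfolding leE_def by (simp add: max_def)
    thus ?thesis unfolding L e .
  qed
  have B: "\<forall>p. nx - s \<le> p \<and> leE p (fst (shift s x)) \<longrightarrow>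
           (\<forall>i. enat (p $ i) = fst (shift s x) $ i \<longrightarrow>
              {f \<in> mor G. rg G f = vtx G (shift s x) p \<and> deg G f = unitv i} = {})"
  proof (intro allI impI)
    fix p i assume h: "nx - s \<le> p \<and> leE p (fst (shift s x))" and e: "enat (p $ i) = fst (shift s x) $ i"
    have a1: "nx \<le> p + s" using h by (auto simp: less_eq_vec_def le_diff_conv)
    have a2: "leE (p + s) (fst x)" using h L by auto
    have si: "enat (s $ i) \<le> fst x $ i" using s unfolding leE_def by auto
    have a3: "enat ((p + s) $ i) = fst x $ i" using e si
      by (cases "fst x $ i") (auto simp: shift_fst)
    show "{f \<in> mor G. rg G f = vtx G (shift s x) p \<and> deg G f = unitv i} = {}"
      using nx(2)[OF a1 a2 a3] by (simp add: vtx_shift)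
  qed
  show ?thesis unfolding boundary_paths_def using shift_gm[OF gm s] nx2 B by blast
qed

lemma concat_fst: "fst (concat G l y) $ i = enat (deg G l $ i) + fst y $ i"
  unfolding concat_def by simp
lemma concat_snd: "snd (concat G l y) a b = seg G (cp G l (snd y 0 (vmax b (deg G l) - deg G l))) a b"
  unfolding concat_def by simp

lemma leE_concat: "leE q (fst (concat G l y)) \<longleftrightarrow> leE (vmax q (deg G l) - deg G l) (fst y)"
proof -
  have "\<forall>i. (enat (q $ i) \<le> fst (concat G l y) $ i) = (enat ((vmax q (deg G l) - deg G l) $ i) \<le> fst y $ i)"
  proof
    fix i show "(enat (q $ i) \<le> fst (concat G l y) $ i) = (enat ((vmax q (deg G l) - deg G l) $ i) \<le> fst y $ i)"
      by (cases "fst y $ i") (auto simp: concat_fst max_def)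
  qed
  thus ?thesis unfolding leE_def by simp
qed

context
  fixes l y
  assumes l: "l \<in> mor G" and y: "y \<in> boundary_paths G" and ly: "sc G l = vtx G y 0"
begin

definition "FF b = cp G l (snd y 0 (vmax b (deg G l) - deg G l))"

lemma ygm: "graph_morph G y" using y unfolding boundary_paths_def by blast

lemma FF_props: assumes "leE b (fst (concat G l y))"
  shows "FF b \<in> mor G \<and> deg G (FF b) = vmax b (deg G l) \<and> rg G (FF b) = rg G l
     \<and> sc G (FF b) = vtx G y (vmax b (deg G l) - deg G l)"
proof -
  have b: "leE (vmax b (deg G l) - deg G l) (fst y)" using assms leE_concat by auto
  note Y = gm_seg[OF ygm vzero_le b]
  have "deg G l + (vmax b (deg G l) - deg G l) = vmax b (deg G l)" by (simp add: vec_eq_iff)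
  thus ?thesis using cp_props[OF l] Y ly unfolding FF_def by simp
qed

lemma FF_cons: assumes "p \<le> q" "q \<le> b" "leE b (fst (concat G l y))"
  shows "seg G (FF b) p q = seg G (FF q) p q"
proof -
  let ?q = "vmax q (deg G l) - deg G l" and ?b = "vmax b (deg G l) - deg G l"
  have qb: "?q \<le> ?b" using assms(2) by (rule vmax_diff_mono)
  have b: "leE ?b (fst y)" using assms leE_concat by auto
  have qz: "leE q (fst (concat G l y))" using leE_mono assms by blast
  note Y1 = gm_seg[OF ygm vzero_le leE_mono[OF qb b]]
  note Y2 = gm_seg[OF ygm qb b]
  have e: "snd y 0 ?b = cp G (snd y 0 ?q) (snd y ?q ?b)" using gm_cp[OF ygm vzero_le qb b] by simp
  have "FF b = cp G (FF q) (snd y ?q ?b)"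
    unfolding FF_def e using assoc[OF l] Y1 Y2 ly by simp
  moreover have "q \<le> deg G (FF q)" using FF_props[OF qz] by (simp add: less_eq_vec_def)
  ultimately show ?thesis using seg_ext[of "FF q" "snd y ?q ?b" p q] FF_props[OF qz] Y1 Y2 assms(1)
    by simp
qed

lemma concat_gm: "graph_morph G (concat G l y)"
  unfolding graph_morph_def
proof (intro conjI; intro allI impI)
  fix p q assume h: "p \<le> q \<and> leE q (fst (concat G l y))"
  have pz: "leE p (fst (concat G l y))" using h leE_mono by blast
  have qd: "q \<le> deg G (FF q)" using FF_props h by (simp add: less_eq_vec_def)
  note S = seg_props[OF conjunct1[OF FF_props[OF conjunct2[OF h]]] conjunct1[OF h] qd]
  have "seg G (FF q) p p = seg G (FF p) p p" using FF_cons[of p p q] h by simp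
  then show "snd (concat G l y) p q \<in> mor G \<and> deg G (snd (concat G l y) p q) = q - p \<and>
         rg G (snd (concat G l y) p q) = rg G (snd (concat G l y) p p) \<and>
         sc G (snd (concat G l y) p q) = rg G (snd (concat G l y) q q)"
    using S unfolding concat_snd FF_def[symmetric] by simp
next
  fix p assume h: "leE p (fst (concat G l y))"
  have pd: "p \<le> deg G (FF p)" using FF_props h by (simp add: less_eq_vec_def)
  show "snd (concat G l y) p p = ident G (rg G (snd (concat G l y) p p))"
    using seg_props(5)[OF conjunct1[OF FF_props[OF h]] order.refl pd] unfolding concat_snd FF_def[symmetric] .
next
  fix p q r assume h: "p \<le> q \<and> q \<le> r \<and> leE r (fst (concat G l y))"
  have rd: "r \<le> deg G (FF r)" using FF_props h by (simp add: less_eq_vec_def)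
  have "seg G (FF r) p q = seg G (FF q) p q" using FF_cons[of p q r] h by simp
  then show "cp G (snd (concat G l y) p q) (snd (concat G l y) q r) = snd (concat G l y) p r"
    using seg_split[OF conjunct1[OF FF_props[OF conjunct2[OF conjunct2[OF h]]]] conjunct1[OF h] conjunct1[OF conjunct2[OF h]] rd]
    unfolding concat_snd FF_def[symmetric] by simp
qed

lemma concat_vtx: assumes "deg G l \<le> p" "leE p (fst (concat G l y))"
  shows "vtx G (concat G l y) p = vtx G y (p - deg G l)"
proof -
  have v: "vmax p (deg G l) = p" using assms(1) by (rule vmax_absorb)
  note F = FF_props[OF assms(2), unfolded v]
  have "seg G (FF p) p p = ident G (sc G (FF p))" using seg_end[of "FF p"] F by simp
  moreover have "sc G (FF p) \<in> obj G" using F mor_obj by blast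
  ultimately show ?thesis unfolding vtx_def concat_snd FF_def[symmetric]
    using id_props F unfolding vtx_def by simp
qed

lemma concat_bp: "concat G l y \<in> boundary_paths G"
proof -
  obtain ny where ny: "leE ny (fst y)" "\<And>p i. ny \<le> p \<Longrightarrow> leE p (fst y) \<Longrightarrow> enat (p $ i) = fst y $ i \<Longrightarrow>
           {f \<in> mor G. rg G f = vtx G y p \<and> deg G f = unitv i} = {}"
    using y unfolding boundary_paths_def by blast
  have n1: "leE (deg G l + ny) (fst (concat G l y))" using ny(1) unfolding leE_def
    by (simp add: concat_fst enat_add_le)
  have B: "\<forall>p. deg G l + ny \<le> p \<and> leE p (fst (concat G l y)) \<longrightarrow>
           (\<forall>i. enat (p $ i) = fst (concat G l y) $ i \<longrightarrow>
              {f \<in> mor G. rg G f = vtx G (concat G l y) p \<and> deg G f = unitv i} = {})"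
  proof (intro allI impI)
    fix p i assume h: "deg G l + ny \<le> p \<and> leE p (fst (concat G l y))" and e: "enat (p $ i) = fst (concat G l y) $ i"
    have lp: "deg G l \<le> p" using h vle_add_split by blast
    have a1: "ny \<le> p - deg G l" using h vle_add_split by blast
    have v: "vmax p (deg G l) = p" using lp by (rule vmax_absorb)
    have a2: "leE (p - deg G l) (fst y)" using h leE_concat v by metis
    have a3: "enat ((p - deg G l) $ i) = fst y $ i" using e
      by (cases "fst y $ i") (auto simp: concat_fst)
    show "{f \<in> mor G. rg G f = vtx G (concat G l y) p \<and> deg G f = unitv i} = {}"
      using ny(2)[OF a1 a2 a3] concat_vtx[OF lp] h by simp
  qed
  show ?thesis unfolding boundary_paths_def using concat_gm n1 B by blast
qed

end

lemma PK: assumes "(x, m, n) \<in> Pset G"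
  shows "snd x (vmin_e m (fst x)) (vmin_e n (fst x)) \<in> mor G"
    "deg G (snd x (vmin_e m (fst x)) (vmin_e n (fst x))) = vmin_e n (fst x) - vmin_e m (fst x)"
    "rg G (snd x (vmin_e m (fst x)) (vmin_e n (fst x))) = vtx G x (vmin_e m (fst x))"
    "sc G (snd x (vmin_e m (fst x)) (vmin_e n (fst x))) = vtx G x (vmin_e n (fst x))"
    "deg G (snd x (vmin_e m (fst x)) (vmin_e n (fst x))) \<le> n - m"
    "\<forall>i. (n - vmin_e n (fst x)) $ i = 0 \<longrightarrow> deg G (snd x (vmin_e m (fst x)) (vmin_e n (fst x))) $ i = (n - m) $ i"
proof -
  have x: "x \<in> boundary_paths G" and mn: "m \<le> n" using assms unfolding Pset_def by auto
  have gm: "graph_morph G x" using x unfolding boundary_paths_def by blast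
  note S = gm_seg[OF gm vmin_mono[OF mn] leE_vmin]
  show "snd x (vmin_e m (fst x)) (vmin_e n (fst x)) \<in> mor G"
    "deg G (snd x (vmin_e m (fst x)) (vmin_e n (fst x))) = vmin_e n (fst x) - vmin_e m (fst x)"
    "rg G (snd x (vmin_e m (fst x)) (vmin_e n (fst x))) = vtx G x (vmin_e m (fst x))"
    "sc G (snd x (vmin_e m (fst x)) (vmin_e n (fst x))) = vtx G x (vmin_e n (fst x))" using S by auto
  show "deg G (snd x (vmin_e m (fst x)) (vmin_e n (fst x))) \<le> n - m"
    unfolding less_eq_vec_def
  proof
    fix i have "m$i \<le> n$i" using mn by (simp add: less_eq_vec_def)
    thus "deg G (snd x (vmin_e m (fst x)) (vmin_e n (fst x))) $ i \<le> (n - m) $ i"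
      using S coordP(1) by (simp add: vmin_mn)
  qed
  show "\<forall>i. (n - vmin_e n (fst x)) $ i = 0 \<longrightarrow> deg G (snd x (vmin_e m (fst x)) (vmin_e n (fst x))) $ i = (n - m) $ i"
  proof (intro allI impI)
    fix i assume "(n - vmin_e n (fst x)) $ i = 0"
    moreover have "m$i \<le> n$i" using mn by (simp add: less_eq_vec_def)
    ultimately show "deg G (snd x (vmin_e m (fst x)) (vmin_e n (fst x))) $ i = (n - m) $ i"
      using S coordP(2) by (simp add: vmin_mn)
  qed
qed

lemma EF: assumes "f \<in> mor (ext G)"
  shows "fst (Kx G f) \<in> mor G \<and> deg G (fst (Kx G f)) \<le> snd (snd (Kx G f))
    \<and> deg (ext G) f = snd (snd (Kx G f))
    \<and> (\<forall>i. Ox G f $ i = 0 \<longrightarrow> deg G (fst (Kx G f)) $ i = snd (snd (Kx G f)) $ i)"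
proof (cases f)
  case (Inl l)
  then show ?thesis using assms by (auto simp: Kx_def Ox_def ext_simps)
next
  case (Inr C)
  then have C: "C \<in> Pset G // Prel G" using assms by (auto simp: ext_simps)
  obtain x m n where r: "rep C = (x, m, n)" by (metis prod_cases3)
  have P: "(x, m, n) \<in> Pset G" using Pq_rep[OF C] r by simp
  show ?thesis using PK[OF P] Inr r by (simp add: Kx_def Ox_def keyP_def ext_simps)
qed

lemma leE_zero: "leE 0 D" unfolding leE_def by (simp add: zero_enat_def[symmetric])

lemma COMP_L: assumes l: "l \<in> mor G" and C: "C \<in> Pset G // Prel G"
  and rgC: "rg (ext G) (Inr C) = Inl (sc G l)"
  shows "\<exists>C''. cp (ext G) (Inl l) (Inr C) = Inr C'' \<and> C'' \<in> Pset G // Prel G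
     \<and> keyP G (rep C'') = (cp G l (fst (Kx G (Inr C))), 0, deg G l + snd (snd (Kx G (Inr C))))
     \<and> fst (snd (Kx G (Inr C))) = 0 \<and> sc G l = rg G (fst (Kx G (Inr C)))"
proof -
  obtain x m n where r: "rep C = (x, m, n)" by (metis prod_cases3)
  have P: "(x, m, n) \<in> Pset G" using Pq_rep[OF C] r by simp
  have x: "x \<in> boundary_paths G" and mn: "m \<le> n" and nx: "\<not> leE n (fst x)" using P unfolding Pset_def by auto
  have gm: "graph_morph G x" using x unfolding boundary_paths_def by blast
  have mx: "leE m (fst x)" and vm: "vtx G x m = sc G l"
    using rgC r by (auto simp: ext_simps split: if_splits)
  have mm: "vmin_e m (fst x) = m" using vmin_id[OF mx] .
  define nn where "nn = vmin_e n (fst x)"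
  have mnn: "m \<le> nn" unfolding nn_def using vmin_mono[OF mn, of "fst x"] mm by simp
  have nnx: "leE nn (fst x)" unfolding nn_def by (rule leE_vmin)
  define xs where "xs = shift m x"
  have xs: "xs \<in> boundary_paths G" unfolding xs_def by (rule shift_bp[OF x mx])
  have ly: "sc G l = vtx G xs 0" unfolding xs_def vtx_shift using vm by simp
  define z where "z = concat G l xs"
  have zb: "z \<in> boundary_paths G" unfolding z_def by (rule concat_bp[OF l xs ly])
  have fz: "\<And>i. fst z $ i = enat (deg G l $ i) + (fst x $ i - enat (m $ i))"
    unfolding z_def xs_def by (simp add: concat_fst shift_fst)
  define N where "N = deg G l + n - m"
  have mi: "\<And>i. m $ i \<le> n $ i" using mn by (simp add: less_eq_vec_def)
  have mxi: "\<And>i. enat (m $ i) \<le> fst x $ i" using mx by (simp add: leE_def)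
  have a: "\<not> leE N (fst z)"
  proof
    assume h: "leE N (fst z)"
    obtain i where i: "\<not> enat (n $ i) \<le> fst x $ i" using nx unfolding leE_def by blast
    have "enat (N $ i) \<le> fst z $ i" using h unfolding leE_def by blast
    thus False using coordL(2)[OF mi[of i] mxi[of i], of "deg G l $ i"] i unfolding fz N_def by simp
  qed
  have t: "(z, 0, N) \<in> Pset G" unfolding Pset_def using zb a by simp
  have v0: "vmin_e 0 (fst z) = 0" by (rule vmin_id[OF leE_zero])
  have vN: "vmin_e N (fst z) = deg G l + (nn - m)"
    unfolding vec_eq_iff
  proof
    fix i show "vmin_e N (fst z) $ i = (deg G l + (nn - m)) $ i"
      unfolding nn_def vmin_mn fz N_def using coordL(1)[OF mi[of i] mxi[of i], of "deg G l $ i"] by (simp add: vmin_mn)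
  qed
  note X = gm_seg[OF gm mnn nnx]
  have lX: "cp G l (snd x m nn) \<in> mor G" "deg G (cp G l (snd x m nn)) = deg G l + (nn - m)"
    using cp_props[OF l] X vm by auto
  have key: "snd z 0 (deg G l + (nn - m)) = cp G l (snd x m nn)"
  proof -
    have v: "vmax (deg G l + (nn - m)) (deg G l) = deg G l + (nn - m)" by (rule vmax_absorb[OF vle_self_add])
    have "snd xs 0 (nn - m) = snd x m nn" unfolding xs_def using vadd_diff2[OF mnn] by simp
    hence "snd z 0 (deg G l + (nn - m)) = seg G (cp G l (snd x m nn)) 0 (deg G l + (nn - m))"
      unfolding z_def concat_snd v by simp
    also have "\<dots> = cp G l (snd x m nn)" using seg_full[OF lX(1)] lX(2) by simp
    finally show ?thesis .
  qed
  have kt: "keyP G (z, 0, N) = (cp G l (snd x m nn), 0, deg G l + (n - m))"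
    unfolding keyP_def using v0 vN key vadd4[OF mn] N_def by simp
  have KC: "Kx G (Inr C) = (snd x m nn, 0, n - m)"
    unfolding Kx_def keyP_def using r mm nn_def by (simp add: vdiff_self)
  have cpe: "cp (ext G) (Inl l) (Inr C) = Inr (Pcls G z 0 N)"
    unfolding ext_simps r z_def xs_def N_def by simp
  have scl: "sc G l = rg G (snd x m nn)" using X vm by simp
  show ?thesis using Pcls_in[OF t] cpe kt KC scl by auto
qed

lemma COMP_R: assumes C: "C \<in> Pset G // Prel G" and C': "C' \<in> Pset G // Prel G"
  and scr: "sc (ext G) (Inr C) = rg (ext G) (Inr C')"
  shows "\<exists>C''. cp (ext G) (Inr C) (Inr C') = Inr C'' \<and> C'' \<in> Pset G // Prel G
     \<and> keyP G (rep C'') = (cp G (fst (Kx G (Inr C))) (fst (Kx G (Inr C'))), fst (snd (Kx G (Inr C))),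
          snd (snd (Kx G (Inr C))) + snd (snd (Kx G (Inr C'))))
     \<and> fst (snd (Kx G (Inr C'))) = Ox G (Inr C) \<and> sc G (fst (Kx G (Inr C))) = rg G (fst (Kx G (Inr C')))
     \<and> (\<forall>i. Ox G (Inr C) $ i \<noteq> 0 \<longrightarrow> deg G (fst (Kx G (Inr C'))) $ i = 0)"
proof -
  obtain x m n where r: "rep C = (x, m, n)" by (metis prod_cases3)
  obtain y p q where r': "rep C' = (y, p, q)" by (metis prod_cases3)
  have P: "(x, m, n) \<in> Pset G" using Pq_rep[OF C] r by simp
  have P': "(y, p, q) \<in> Pset G" using Pq_rep[OF C'] r' by simp
  have x: "x \<in> boundary_paths G" and mn: "m \<le> n" and nx: "\<not> leE n (fst x)" using P unfolding Pset_def by auto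
  have y: "y \<in> boundary_paths G" and pq: "p \<le> q" and qy: "\<not> leE q (fst y)" using P' unfolding Pset_def by auto
  have gx: "graph_morph G x" using x unfolding boundary_paths_def by blast
  have gy: "graph_morph G y" using y unfolding boundary_paths_def by blast
  have py: "\<not> leE p (fst y)" and VV: "Vcls G x n = Vcls G y p"
    using scr r r' by (auto simp: ext_simps split: if_splits)
  have kV: "keyV G (x, n) = keyV G (y, p)"
    by (rule Vcls_key[OF _ _ VV]) (use x nx y py in \<open>auto simp: Vset_def\<close>)
  define mm where "mm = vmin_e m (fst x)"
  define nn where "nn = vmin_e n (fst x)"
  define pp where "pp = vmin_e p (fst y)"
  define qq where "qq = vmin_e q (fst y)"
  have vv: "vtx G x nn = vtx G y pp" and oo: "n - nn = p - pp"
    using kV unfolding keyV_def nn_def pp_def by auto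
  have mmnn: "mm \<le> nn" unfolding mm_def nn_def by (rule vmin_mono[OF mn])
  have ppqq: "pp \<le> qq" unfolding pp_def qq_def by (rule vmin_mono[OF pq])
  have nnx: "leE nn (fst x)" unfolding nn_def by (rule leE_vmin)
  have qqy: "leE qq (fst y)" unfolding qq_def by (rule leE_vmin)
  have ppy: "leE pp (fst y)" unfolding pp_def by (rule leE_vmin)
  define lam where "lam = snd x 0 nn"
  note L = gm_seg[OF gx vzero_le nnx, folded lam_def]
  define ys where "ys = shift pp y"
  have ys: "ys \<in> boundary_paths G" unfolding ys_def by (rule shift_bp[OF y ppy])
  have ly: "sc G lam = vtx G ys 0" unfolding ys_def vtx_shift using L vv by simp
  define z where "z = concat G lam ys"
  have zb: "z \<in> boundary_paths G" unfolding z_def by (rule concat_bp[OF conjunct1[OF L] ys ly])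
  have fz: "\<And>i. fst z $ i = enat (mnE (fst x $ i) (n $ i)) + (fst y $ i - enat (mnE (fst y $ i) (p $ i)))"
    unfolding z_def ys_def using L by (simp add: concat_fst shift_fst nn_def pp_def vmin_mn)
  have mi: "\<And>i. m $ i \<le> n $ i" using mn by (simp add: less_eq_vec_def)
  have pi: "\<And>i. p $ i \<le> q $ i" using pq by (simp add: less_eq_vec_def)
  have oi: "\<And>i. n $ i - mnE (fst x $ i) (n $ i) = p $ i - mnE (fst y $ i) (p $ i)"
  proof -
    fix i have "(n - nn) $ i = (p - pp) $ i" using oo by simp
    thus "n $ i - mnE (fst x $ i) (n $ i) = p $ i - mnE (fst y $ i) (p $ i)"
      unfolding nn_def pp_def by (simp add: vmin_mn)
  qed
  note CR = coordR[OF mi pi oi]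
  define N where "N = n + q - p"
  have a: "\<not> leE N (fst z)"
  proof
    assume h: "leE N (fst z)"
    obtain i where i: "\<not> enat (q $ i) \<le> fst y $ i" using qy unfolding leE_def by blast
    have "enat (N $ i) \<le> fst z $ i" using h unfolding leE_def by blast
    thus False using CR(3)[of i] i unfolding fz N_def by simp
  qed
  have t: "(z, m, N) \<in> Pset G" unfolding Pset_def N_def using zb a vle2[OF mn pq] by (simp add: N_def)
  have vm: "vmin_e m (fst z) = mm"
    unfolding vec_eq_iff
  proof
    fix i show "vmin_e m (fst z) $ i = mm $ i"
      unfolding mm_def vmin_mn fz using CR(1)[of i] by (simp add: vmin_mn)
  qed
  have vN: "vmin_e N (fst z) = nn + (qq - pp)"
    unfolding vec_eq_iff
  proof
    fix i show "vmin_e N (fst z) $ i = (nn + (qq - pp)) $ i"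
      unfolding nn_def qq_def pp_def vmin_mn fz N_def using CR(2)[of i] by (simp add: vmin_mn)
  qed
  have mmx: "leE mm (fst x)" unfolding mm_def by (rule leE_vmin)
  define A where "A = snd x 0 mm"
  define B where "B = snd x mm nn"
  define Y where "Y = snd y pp qq"
  note SA = gm_seg[OF gx vzero_le mmx, folded A_def]
  note SB = gm_seg[OF gx mmnn nnx, folded B_def]
  note SY = gm_seg[OF gy ppqq qqy, folded Y_def]
  have lamAB: "lam = cp G A B" unfolding lam_def A_def B_def using gm_cp[OF gx vzero_le mmnn nnx] by simp
  have BY: "sc G B = rg G Y" using SB SY vv by simp
  have cBY: "cp G B Y \<in> mor G" "rg G (cp G B Y) = rg G B" "sc G (cp G B Y) = sc G Y"
     "deg G (cp G B Y) = (nn - mm) + (qq - pp)" using cp_props[OF _ _ BY] SB SY by auto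
  have ABY: "sc G A = rg G (cp G B Y)" using SA SB cBY by simp
  have cABY: "cp G A (cp G B Y) \<in> mor G" "sc G (cp G A (cp G B Y)) = sc G Y"
    using cp_props[OF _ cBY(1) ABY] SA cBY by auto
  have sY: "sc G Y \<in> obj G" using mor_obj SY by blast
  note IY = id_props[OF sY]
  have key: "snd z mm (nn + (qq - pp)) = cp G B Y"
  proof -
    have v: "vmax (nn + (qq - pp)) nn = nn + (qq - pp)" by (rule vmax_absorb[OF vle_self_add])
    have d: "deg G lam = nn" using L by simp
    have "snd ys 0 (qq - pp) = Y" unfolding ys_def Y_def using vadd_diff2[OF ppqq] by simp
    hence "snd z mm (nn + (qq - pp)) = seg G (cp G lam Y) mm (nn + (qq - pp))"
      unfolding z_def concat_snd v d by simp
    also have "cp G lam Y = cp G (cp G A (cp G B Y)) (ident G (sc G Y))"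
      unfolding lamAB using assoc[of A B Y] SA SB SY BY id_r[OF cABY(1)] cABY(2) by simp
    also have "seg G \<dots> mm (nn + (qq - pp)) = cp G B Y"
      using seg_mid[OF conjunct1[OF SA] cBY(1) conjunct1[OF IY] ABY] IY cBY SA vadd3[OF mmnn] by simp
    finally show ?thesis .
  qed
  have kt: "keyP G (z, m, N) = (cp G B Y, m - mm, (n - m) + (q - p))"
    unfolding keyP_def using vm vN key vsub1[OF mn pq] N_def by simp
  have KC: "Kx G (Inr C) = (B, m - mm, n - m)"
    unfolding Kx_def keyP_def B_def using r mm_def nn_def by simp
  have KC': "Kx G (Inr C') = (Y, p - pp, q - p)"
    unfolding Kx_def keyP_def Y_def using r' pp_def qq_def by simp
  have OC: "Ox G (Inr C) = n - nn" unfolding Ox_def using r nn_def by simp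
  have cpe: "cp (ext G) (Inr C) (Inr C') = Inr (Pcls G z m N)"
    unfolding ext_simps r r' z_def ys_def N_def lam_def nn_def pp_def by simp
  have dead: "\<forall>i. Ox G (Inr C) $ i \<noteq> 0 \<longrightarrow> deg G Y $ i = 0"
  proof (intro allI impI)
    fix i assume "Ox G (Inr C) $ i \<noteq> 0"
    hence "n $ i - mnE (fst x $ i) (n $ i) \<noteq> 0" unfolding OC nn_def by (simp add: vmin_mn)
    thus "deg G Y $ i = 0" using CR(4)[of i] SY unfolding qq_def pp_def by (simp add: vmin_mn)
  qed
  show ?thesis using Pcls_in[OF t] cpe kt KC KC' OC oo BY dead by auto
qed

lemma COMP: assumes l: "l \<in> mor (ext G)" and C': "C' \<in> Pset G // Prel G"
  and scr: "sc (ext G) l = rg (ext G) (Inr C')"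
  shows "\<exists>C''. cp (ext G) l (Inr C') = Inr C'' \<and> C'' \<in> Pset G // Prel G
     \<and> Kx G (Inr C'') = (cp G (fst (Kx G l)) (fst (Kx G (Inr C'))), fst (snd (Kx G l)),
          snd (snd (Kx G l)) + snd (snd (Kx G (Inr C'))))
     \<and> fst (snd (Kx G (Inr C'))) = Ox G l \<and> sc G (fst (Kx G l)) = rg G (fst (Kx G (Inr C')))
     \<and> (\<forall>i. Ox G l $ i \<noteq> 0 \<longrightarrow> deg G (fst (Kx G (Inr C'))) $ i = 0)"
proof (cases l)
  case (Inl lam)
  have lm: "lam \<in> mor G" using l Inl by (auto simp: ext_simps)
  have "rg (ext G) (Inr C') = Inl (sc G lam)" using scr Inl by (simp add: ext_simps)
  from COMP_L[OF lm C' this] show ?thesis using Inl by (auto simp: Kx_def Ox_def)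
next
  case (Inr C)
  have Cm: "C \<in> Pset G // Prel G" using l Inr by (auto simp: ext_simps)
  from COMP_R[OF Cm C'] show ?thesis using Inr scr by (auto simp: Kx_def)
qed

lemma Kx_inj: "C \<in> Pset G // Prel G \<Longrightarrow> C' \<in> Pset G // Prel G \<Longrightarrow> Kx G (Inr C) = Kx G (Inr C') \<Longrightarrow> C = C'"
  unfolding Kx_def using Pq_eq by simp

lemma rg_Inl_l: "f \<in> mor (ext G) \<Longrightarrow> sc (ext G) f = Inl u \<Longrightarrow> \<exists>l. f = Inl l"
  by (cases f) (auto simp: ext_simps split: prod.splits)

lemma FA: assumes fa: "finitely_aligned G" shows "finitely_aligned (ext G)"
  unfolding finitely_aligned_def
proof (intro ballI)
  fix l m assume l: "l \<in> mor (ext G)" and m: "m \<in> mor (ext G)"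
  let ?S = "min_ext (ext G) l m"
  have memS: "\<And>a b. (a, b) \<in> ?S \<Longrightarrow> a \<in> mor (ext G) \<and> b \<in> mor (ext G) \<and> sc (ext G) l = rg (ext G) a
     \<and> sc (ext G) m = rg (ext G) b \<and> cp (ext G) l a = cp (ext G) m b
     \<and> deg (ext G) (cp (ext G) l a) = vmax (deg (ext G) l) (deg (ext G) m)"
    unfolding min_ext_def by auto
  define S1 where "S1 = {(a, b). (a, b) \<in> ?S \<and> (\<exists>\<alpha> \<beta>. a = Inl \<alpha> \<and> b = Inl \<beta>)}"
  define S2 where "S2 = {(a, b). (a, b) \<in> ?S \<and> (\<exists>C C'. a = Inr C \<and> b = Inr C')}"
  have split: "?S \<subseteq> S1 \<union> S2"
  proof
    fix ab assume ab: "ab \<in> ?S"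
    obtain a b where e: "ab = (a, b)" by fastforce
    note M = memS[OF ab[unfolded e]]
    have no1: False if "a = Inl \<alpha>" "b = Inr D" for \<alpha> D
    proof -
      have D: "D \<in> Pset G // Prel G" using M that by (auto simp: ext_simps)
      have "sc (ext G) l = Inl (rg G \<alpha>)" using M that by (simp add: ext_simps)
      then obtain lam where lam: "l = Inl lam" using rg_Inl_l[OF l] by blast
      have "\<exists>C''. cp (ext G) m b = Inr C''" using COMP[OF m D] M that by auto
      moreover have "\<exists>u. cp (ext G) l a = Inl u" using lam that by (simp add: ext_simps)
      ultimately show False using M by auto
    qed
    have no2: False if "a = Inr D" "b = Inl \<beta>" for \<beta> D
    proof -
      have D: "D \<in> Pset G // Prel G" using M that by (auto simp: ext_simps)
      have "sc (ext G) m = Inl (rg G \<beta>)" using M that by (simp add: ext_simps)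
      then obtain mu where mu: "m = Inl mu" using rg_Inl_l[OF m] by blast
      have "\<exists>C''. cp (ext G) l a = Inr C''" using COMP[OF l D] M that by auto
      moreover have "\<exists>u. cp (ext G) m b = Inl u" using mu that by (simp add: ext_simps)
      ultimately show False using M by auto
    qed
    show "ab \<in> S1 \<union> S2" unfolding S1_def S2_def e using ab e no1 no2
      by (cases a; cases b) auto
  qed
  have fin1: "finite S1"
  proof (cases "\<exists>lam mu. l = Inl lam \<and> m = Inl mu")
    case True
    then obtain lam mu where lm: "l = Inl lam" "m = Inl mu" by blast
    have "S1 \<subseteq> map_prod Inl Inl ` min_ext G lam mu"
    proof
      fix ab assume ab: "ab \<in> S1"
      then obtain \<alpha> \<beta> where e: "ab = (Inl \<alpha>, Inl \<beta>)" and s: "(Inl \<alpha>, Inl \<beta>) \<in> ?S" unfolding S1_def by blast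
      note M = memS[OF s]
      have "(\<alpha>, \<beta>) \<in> min_ext G lam mu" using M lm unfolding min_ext_def by (auto simp: ext_simps)
      thus "ab \<in> map_prod Inl Inl ` min_ext G lam mu" using e by force
    qed
    moreover have "lam \<in> mor G" "mu \<in> mor G" using l m lm by (auto simp: ext_simps)
    ultimately show ?thesis using fa unfolding finitely_aligned_def by (meson finite_imageI finite_subset)
  next
    case False
    have "S1 = {}"
    proof (rule ccontr)
      assume "S1 \<noteq> {}"
      then obtain \<alpha> \<beta> where s: "(Inl \<alpha>, Inl \<beta>) \<in> ?S" unfolding S1_def by blast
      note M = memS[OF s]
      show False using rg_Inl_l[OF l] rg_Inl_l[OF m] M False by (auto simp: ext_simps)
    qed
    thus ?thesis by simp
  qed
  define Dm where "Dm = vmax (snd (snd (Kx G l))) (snd (snd (Kx G m)))"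
  define T where "T = (\<lambda>(\<alpha>, \<beta>). ((\<alpha>, Ox G l, Dm - snd (snd (Kx G l))), (\<beta>, Ox G m, Dm - snd (snd (Kx G m)))))
       ` min_ext G (fst (Kx G l)) (fst (Kx G m))"
  have finT: "finite T" unfolding T_def using fa EF[OF l] EF[OF m] unfolding finitely_aligned_def by blast
  have EFl: "deg (ext G) l = snd (snd (Kx G l))" using EF[OF l] by blast
  have EFm: "deg (ext G) m = snd (snd (Kx G m))" using EF[OF m] by blast
  have img: "(\<lambda>(a, b). (Kx G a, Kx G b)) ` S2 \<subseteq> T"
  proof
    fix kk assume "kk \<in> (\<lambda>(a, b). (Kx G a, Kx G b)) ` S2"
    then obtain C C' where kk: "kk = (Kx G (Inr C), Kx G (Inr C'))" and s: "(Inr C, Inr C') \<in> ?S"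
      unfolding S2_def by auto
    note M = memS[OF s]
    have C: "C \<in> Pset G // Prel G" and C': "C' \<in> Pset G // Prel G" using M by (auto simp: ext_simps)
    obtain C1 where c1: "cp (ext G) l (Inr C) = Inr C1" "C1 \<in> Pset G // Prel G"
      "Kx G (Inr C1) = (cp G (fst (Kx G l)) (fst (Kx G (Inr C))), fst (snd (Kx G l)),
          snd (snd (Kx G l)) + snd (snd (Kx G (Inr C))))"
      "fst (snd (Kx G (Inr C))) = Ox G l" "sc G (fst (Kx G l)) = rg G (fst (Kx G (Inr C)))"
      "\<forall>i. Ox G l $ i \<noteq> 0 \<longrightarrow> deg G (fst (Kx G (Inr C))) $ i = 0"
      using COMP[OF l C] M by blast
    obtain C2 where c2: "cp (ext G) m (Inr C') = Inr C2" "C2 \<in> Pset G // Prel G"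
      "Kx G (Inr C2) = (cp G (fst (Kx G m)) (fst (Kx G (Inr C'))), fst (snd (Kx G m)),
          snd (snd (Kx G m)) + snd (snd (Kx G (Inr C'))))"
      "fst (snd (Kx G (Inr C'))) = Ox G m" "sc G (fst (Kx G m)) = rg G (fst (Kx G (Inr C')))"
      "\<forall>i. Ox G m $ i \<noteq> 0 \<longrightarrow> deg G (fst (Kx G (Inr C'))) $ i = 0"
      using COMP[OF m C'] M by blast
    have C12: "C1 = C2" using M c1(1) c2(1) by simp
    have e1: "cp G (fst (Kx G l)) (fst (Kx G (Inr C))) = cp G (fst (Kx G m)) (fst (Kx G (Inr C')))"
      using c1(3) c2(3) C12 by simp
    have C1m: "Inr C1 \<in> mor (ext G)" using c1(2) by (simp add: ext_simps)
    have dd: "snd (snd (Kx G l)) + snd (snd (Kx G (Inr C))) = Dm"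
      using M c1(1) EF[OF C1m] c1(3) EFl EFm unfolding Dm_def by simp
    have aC: "Inr C \<in> mor (ext G)" and bC: "Inr C' \<in> mor (ext G)" using C C' by (auto simp: ext_simps)
    note Fl = EF[OF l] and Fm = EF[OF m] and Fa = EF[OF aC] and Fb = EF[OF bC]
    define dl where "dl = deg G (fst (Kx G l))"
    define da where "da = deg G (fst (Kx G (Inr C)))"
    define dm where "dm = deg G (fst (Kx G m))"
    define db where "db = deg G (fst (Kx G (Inr C')))"
    have g1: "deg G (cp G (fst (Kx G l)) (fst (Kx G (Inr C)))) = dl + da"
      using cp_props Fl Fa c1(5) unfolding dl_def da_def by blast
    have g2: "deg G (cp G (fst (Kx G m)) (fst (Kx G (Inr C')))) = dm + db"
      using cp_props Fm Fb c2(5) unfolding dm_def db_def by blast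
    have ldeg: "deg G (cp G (fst (Kx G l)) (fst (Kx G (Inr C)))) = vmax dl dm"
      unfolding g1 vec_eq_iff
    proof
      fix i
      have h1: "dl $ i \<le> snd (snd (Kx G l)) $ i" using Fl unfolding dl_def by (simp add: less_eq_vec_def)
      have h2: "da $ i \<le> snd (snd (Kx G (Inr C))) $ i" using Fa unfolding da_def by (simp add: less_eq_vec_def)
      have h3: "snd (snd (Kx G l)) $ i + snd (snd (Kx G (Inr C))) $ i
           = max (snd (snd (Kx G l)) $ i) (snd (snd (Kx G m)) $ i)"
        using dd unfolding Dm_def vec_eq_iff by (metis vector_add_component vmax_comp)
      have h4: "dl $ i + da $ i = dm $ i + db $ i" using g1 g2 e1 by (metis vector_add_component)
      show "(dl + da) $ i = vmax dl dm $ i"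
        using coordFA[OF h1 h2 h3 h4, of "Ox G l $ i" "Ox G m $ i"]
          c1(6) c2(6) Fl Fm unfolding dl_def da_def dm_def db_def by auto
    qed
    have mem: "(fst (Kx G (Inr C)), fst (Kx G (Inr C'))) \<in> min_ext G (fst (Kx G l)) (fst (Kx G m))"
      unfolding min_ext_def using Fa Fb c1(5) c2(5) e1 ldeg unfolding dl_def dm_def by auto
    have k1: "Kx G (Inr C) = (fst (Kx G (Inr C)), Ox G l, Dm - snd (snd (Kx G l)))"
      using c1(4) dd by (metis prod.collapse vadd_diff_cancel)
    have k2: "snd (snd (Kx G m)) + snd (snd (Kx G (Inr C'))) = Dm"
      using M c2(1) c1(1) C12 EF[OF C1m] c2(3) EFl EFm unfolding Dm_def by simp
    have k2': "Kx G (Inr C') = (fst (Kx G (Inr C')), Ox G m, Dm - snd (snd (Kx G m)))"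
      using c2(4) k2 by (metis prod.collapse vadd_diff_cancel)
    show "kk \<in> T" unfolding T_def kk using mem k1 k2' by (auto intro!: image_eqI[of _ _ "(fst (Kx G (Inr C)), fst (Kx G (Inr C')))"])
  qed
  have inj: "inj_on (\<lambda>(a, b). (Kx G a, Kx G b)) S2"
  proof (rule inj_onI)
    fix u v assume u: "u \<in> S2" and v: "v \<in> S2" and e: "(\<lambda>(a, b). (Kx G a, Kx G b)) u = (\<lambda>(a, b). (Kx G a, Kx G b)) v"
    obtain C1 C1' where u': "u = (Inr C1, Inr C1')" "(Inr C1, Inr C1') \<in> ?S" using u unfolding S2_def by auto
    obtain C2 C2' where v': "v = (Inr C2, Inr C2')" "(Inr C2, Inr C2') \<in> ?S" using v unfolding S2_def by auto
    have q: "C1 \<in> Pset G // Prel G" "C1' \<in> Pset G // Prel G" "C2 \<in> Pset G // Prel G" "C2' \<in> Pset G // Prel G"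
      using memS[OF u'(2)] memS[OF v'(2)] by (auto simp: ext_simps)
    show "u = v" using e u' v' Kx_inj[OF q(1) q(3)] Kx_inj[OF q(2) q(4)] by simp
  qed
  have fin2: "finite S2" using finite_imageD[OF finite_subset[OF img finT] inj] .
  show "finite ?S" using finite_subset[OF split] fin1 fin2 by blast
qed

lemma RG: assumes C: "C \<in> Pset G // Prel G" and C': "C' \<in> Pset G // Prel G"
  and e: "rg (ext G) (Inr C) = rg (ext G) (Inr C')"
  shows "fst (snd (Kx G (Inr C))) = fst (snd (Kx G (Inr C'))) \<and> rg G (fst (Kx G (Inr C))) = rg G (fst (Kx G (Inr C')))"
proof -
  obtain x m n where r: "rep C = (x, m, n)" by (metis prod_cases3)
  obtain y p q where r': "rep C' = (y, p, q)" by (metis prod_cases3)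
  have P: "(x, m, n) \<in> Pset G" using Pq_rep[OF C] r by simp
  have P': "(y, p, q) \<in> Pset G" using Pq_rep[OF C'] r' by simp
  have x: "x \<in> boundary_paths G" and nx: "\<not> leE n (fst x)" using P unfolding Pset_def by auto
  have y: "y \<in> boundary_paths G" and qy: "\<not> leE q (fst y)" using P' unfolding Pset_def by auto
  have K: "Kx G (Inr C) = (snd x (vmin_e m (fst x)) (vmin_e n (fst x)), m - vmin_e m (fst x), n - m)"
    "Kx G (Inr C') = (snd y (vmin_e p (fst y)) (vmin_e q (fst y)), p - vmin_e p (fst y), q - p)"
    unfolding Kx_def keyP_def using r r' by simp_all
  show ?thesis
  proof (cases "leE m (fst x)")
    case True
    hence p: "leE p (fst y)" and v: "vtx G x m = vtx G y p" using e r r' by (auto simp: ext_simps split: if_splits)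
    show ?thesis using K PK(3)[OF P] PK(3)[OF P'] vmin_id[OF True] vmin_id[OF p] v by (simp add: vdiff_self)
  next
    case False
    hence p: "\<not> leE p (fst y)" and v: "Vcls G x m = Vcls G y p" using e r r' by (auto simp: ext_simps split: if_splits)
    have "keyV G (x, m) = keyV G (y, p)"
      by (rule Vcls_key[OF _ _ v]) (use x False y p in \<open>auto simp: Vset_def\<close>)
    thus ?thesis using K PK(3)[OF P] PK(3)[OF P'] unfolding keyV_def by simp
  qed
qed

lemma RF: assumes rf: "row_finite G" shows "row_finite (ext G)"
  unfolding row_finite_def
proof (intro ballI allI)
  fix v N assume v: "v \<in> obj (ext G)"
  let ?S = "{f \<in> mor (ext G). rg (ext G) f = v \<and> deg (ext G) f = N}"
  define S1 where "S1 = {l \<in> mor G. Inl (rg G l) = v \<and> deg G l = N}"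
  define S2 where "S2 = {f \<in> ?S. \<exists>C. f = Inr C}"
  have split: "?S \<subseteq> Inl ` S1 \<union> S2"
  proof
    fix f assume f: "f \<in> ?S"
    show "f \<in> Inl ` S1 \<union> S2"
    proof (cases f)
      case (Inl l) thus ?thesis using f unfolding S1_def by (auto simp: ext_simps)
    next
      case (Inr C) thus ?thesis using f unfolding S2_def by auto
    qed
  qed
  have fin1: "finite S1"
  proof (cases v)
    case (Inl u)
    have u: "u \<in> obj G" using v Inl by (auto simp: ext_simps)
    have "S1 = {l \<in> mor G. rg G l = u \<and> deg G l = N}" unfolding S1_def Inl by auto
    thus ?thesis using rf u unfolding row_finite_def by simp
  next
    case (Inr V) thus ?thesis unfolding S1_def by simp
  qed
  have fin2: "finite S2"
  proof (cases "S2 = {}")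
    case True thus ?thesis by simp
  next
    case False
    then obtain C0 where f0: "Inr C0 \<in> S2" unfolding S2_def by blast
    have C0: "C0 \<in> Pset G // Prel G" using f0 unfolding S2_def by (auto simp: ext_simps)
    define u0 where "u0 = rg G (fst (Kx G (Inr C0)))"
    define e0 where "e0 = fst (snd (Kx G (Inr C0)))"
    have u0: "u0 \<in> obj G" unfolding u0_def using EF[of "Inr C0"] f0 mor_obj unfolding S2_def by blast
    define T where "T = (\<lambda>\<alpha>. (\<alpha>, e0, N)) ` (\<Union>d\<in>{d. d \<le> N}. {\<alpha> \<in> mor G. rg G \<alpha> = u0 \<and> deg G \<alpha> = d})"
    have finT: "finite T" unfolding T_def
      using rf u0 finite_vle unfolding row_finite_def by blast
    have img: "Kx G ` S2 \<subseteq> T"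
    proof
      fix k assume "k \<in> Kx G ` S2"
      then obtain C where k: "k = Kx G (Inr C)" and s: "Inr C \<in> S2" unfolding S2_def by auto
      have Cm: "Inr C \<in> mor (ext G)" and rgv: "rg (ext G) (Inr C) = v" and dN: "deg (ext G) (Inr C) = N"
        using s unfolding S2_def by auto
      have C: "C \<in> Pset G // Prel G" using Cm by (auto simp: ext_simps)
      have rg0: "rg (ext G) (Inr C0) = v" using f0 unfolding S2_def by auto
      note R = RG[OF C C0, unfolded rgv rg0, simplified]
      note F = EF[OF Cm]
      have "k = (fst (Kx G (Inr C)), e0, N)" using k R F dN unfolding e0_def by (metis prod.collapse)
      moreover have "fst (Kx G (Inr C)) \<in> {\<alpha> \<in> mor G. rg G \<alpha> = u0 \<and> deg G \<alpha> = deg G (fst (Kx G (Inr C)))}"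
        using F R unfolding u0_def by simp
      moreover have "deg G (fst (Kx G (Inr C))) \<le> N" using F dN by simp
      ultimately show "k \<in> T" unfolding T_def by blast
    qed
    have inj: "inj_on (Kx G) S2"
    proof (rule inj_onI)
      fix a b assume a: "a \<in> S2" and b: "b \<in> S2" and e: "Kx G a = Kx G b"
      obtain C where a': "a = Inr C" using a unfolding S2_def by auto
      obtain C' where b': "b = Inr C'" using b unfolding S2_def by auto
      have "C \<in> Pset G // Prel G" "C' \<in> Pset G // Prel G" using a b a' b' unfolding S2_def by (auto simp: ext_simps)
      thus "a = b" using Kx_inj e a' b' by simp
    qed
    show ?thesis using finite_imageD[OF finite_subset[OF img finT] inj] .
  qed
  show "finite ?S" using finite_subset[OF split] fin1 fin2 by blast
qed

end

theorem theorem3p26: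
  fixes G :: "('v, 'a, 'k::finite) kg"
  assumes "kgraph G"
  shows "(finitely_aligned G \<longrightarrow> finitely_aligned (ext G))
       \<and> (row_finite G \<longrightarrow> row_finite (ext G))"
proof -
  interpret kgl G by (rule kgl.intro[OF assms])
  show ?thesis using FA RF by blast
qed

end
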